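(* Fix $\tau>0$ and real numbers $V_r,V_b$. The function $\tilde h:\mathcal S^\circ\to\mathbb R$, $$\tilde h(r,b)=r(\log r-1)+b(\log b-1)+rV_r+bV_b+\frac{\bar\alpha}{2}(r^2+2rb+b^2)+\tau(1-\bar\gamma\rho)(\log(1-\bar\gamma\rho)-1),\quad\rho=r+b,$$ is strictly convex and belongs to $C^2(\mathcal S^\circ)$. Its gradient $\tilde h':\mathcal S^\circ\to\mathbb R^2$ is invertible (a bijection onto $\mathbb R^2$), and the inverse of its Hessian $\tilde h''$ is uniformly bounded on $\mathcal S^\circ$.
   Context: $\epsilon>0$, $d\in\{2,3\}$, $\bar\alpha=\epsilon^d\,2(d-1)\pi/d$, $\bar\gamma=\epsilon^d\pi/d$. $\mathcal S=\{(r,b)\in\mathbb R^2: r\ge0,\ b\ge0,\ r+b\le1/\bar\gamma\}$ with interior $\mathcal S^\circ$. *)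

theory Defs
  imports "HOL-Analysis.Analysis"
begin

definition strict_convex_on :: "'a::real_vector set \<Rightarrow> ('a \<Rightarrow> real) \<Rightarrow> bool" where
  "strict_convex_on S f \<longleftrightarrow> convex S \<and>
     (\<forall>x\<in>S. \<forall>y\<in>S. \<forall>t::real. x \<noteq> y \<and> 0 < t \<and> t < 1 \<longrightarrow>
        f (t *\<^sub>R x + (1 - t) *\<^sub>R y) < t * f x + (1 - t) * f y)"

definition alpha_bar :: "real \<Rightarrow> nat \<Rightarrow> real" where
  "alpha_bar \<epsilon> d = \<epsilon> ^ d * (2 * (real d - 1) * pi / real d)"

definition gamma_bar :: "real \<Rightarrow> nat \<Rightarrow> real" where
  "gamma_bar \<epsilon> d = \<epsilon> ^ d * pi / real d"

definition S_set :: "real \<Rightarrow> nat \<Rightarrow> (real \<times> real) set" where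
  "S_set \<epsilon> d = {(r, b). r \<ge> 0 \<and> b \<ge> 0 \<and> r + b \<le> 1 / gamma_bar \<epsilon> d}"

definition h_tilde :: "real \<Rightarrow> nat \<Rightarrow> real \<Rightarrow> real \<Rightarrow> real \<Rightarrow> real \<times> real \<Rightarrow> real" where
  "h_tilde \<epsilon> d \<tau> Vr Vb = (\<lambda>(r, b).
     let \<rho> = r + b in
       r * (ln r - 1) + b * (ln b - 1) + r * Vr + b * Vb
       + alpha_bar \<epsilon> d / 2 * (r\<^sup>2 + 2 * r * b + b\<^sup>2)
       + \<tau> * (1 - gamma_bar \<epsilon> d * \<rho>) * (ln (1 - gamma_bar \<epsilon> d * \<rho>) - 1))"

end

theory Submission imports Defs begin

definition phi :: "real \<Rightarrow> real" where "phi u = u * (ln u - 1)"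
definition psi :: "real \<Rightarrow> real \<Rightarrow> real \<Rightarrow> real \<Rightarrow> real" where
  "psi a c \<tau> \<rho> = a / 2 * \<rho>\<^sup>2 + \<tau> * (1 - c * \<rho>) * (ln (1 - c * \<rho>) - 1)"
definition FF :: "real \<Rightarrow> real \<Rightarrow> real \<Rightarrow> real \<Rightarrow> real" where
  "FF a c \<tau> \<rho> = a * \<rho> - \<tau> * c * ln (1 - c * \<rho>)"
definition FF' :: "real \<Rightarrow> real \<Rightarrow> real \<Rightarrow> real \<Rightarrow> real" where
  "FF' a c \<tau> \<rho> = a + \<tau> * c\<^sup>2 / (1 - c * \<rho>)"

lemma strict_conv_real0:
  fixes f f' :: "real \<Rightarrow> real"
  assumes "connected A" "\<And>x. x \<in> A \<Longrightarrow> (f has_real_derivative f' x) (at x)"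
    "\<And>x y. x \<in> A \<Longrightarrow> y \<in> A \<Longrightarrow> x < y \<Longrightarrow> f' x < f' y"
    and xy: "x \<in> A" "y \<in> A" "x < y" and t: "0 < t" "t < 1"
  shows "f ((1 - t) * x + t * y) < (1 - t) * f x + t * f y"
proof -
  define z where "z = (1 - t) * x + t * y"
  with \<open>connected A\<close> and xy have ivl: "{x..y} \<subseteq> A"
    using connected_contains_Icc by blast
  from xy t have xz: "z > x"
    by (simp add: z_def algebra_simps)
  have "y - z = (1 - t) * (y - x)"
    by (simp add: z_def algebra_simps)
  also from xy t have "\<dots> > 0"
    by (intro mult_pos_pos) simp_all
  finally have yz: "z < y"
    by simp
  from assms xz yz ivl t have "\<exists>\<xi>. \<xi> > x \<and> \<xi> < z \<and> f z - f x = (z - x) * f' \<xi>"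
    by (intro MVT2) (auto intro!: assms(2))
  then obtain \<xi> where \<xi>: "\<xi> > x" "\<xi> < z" "f' \<xi> = (f z - f x) / (z - x)"
    by auto
  from assms xz yz ivl t have "\<exists>\<eta>. \<eta> > z \<and> \<eta> < y \<and> f y - f z = (y - z) * f' \<eta>"
    by (intro MVT2) (auto intro!: assms(2))
  then obtain \<eta> where \<eta>: "\<eta> > z" "\<eta> < y" "f' \<eta> = (f y - f z) / (y - z)"
    by auto
  from \<eta>(3) have "(f y - f z) / (y - z) = f' \<eta>" ..
  also from \<xi> \<eta> ivl have "\<xi> \<in> A" "\<eta> \<in> A"
    by auto
  with \<xi> \<eta> have "f' \<eta> > f' \<xi>"
    by (intro assms(3)) auto
  also from \<xi>(3) have "f' \<xi> = (f z - f x) / (z - x)" .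
  finally have "(f y - f z) * (z - x) > (f z - f x) * (y - z)"
    using xz yz by (simp add: field_simps)
  also have "z - x = t * (y - x)"
    by (simp add: z_def algebra_simps)
  also have "y - z = (1 - t) * (y - x)"
    by (simp add: z_def algebra_simps)
  finally have "(f y - f z) * t > (f z - f x) * (1 - t)"
    using xy by simp
  then show ?thesis
    by (simp add: z_def algebra_simps)
qed

lemma strict_conv_real:
  fixes f f' :: "real \<Rightarrow> real"
  assumes "connected A" "\<And>x. x \<in> A \<Longrightarrow> (f has_real_derivative f' x) (at x)"
    "\<And>x y. x \<in> A \<Longrightarrow> y \<in> A \<Longrightarrow> x < y \<Longrightarrow> f' x < f' y"
    and xy: "x \<in> A" "y \<in> A" "x \<noteq> y" and t: "0 < t" "t < 1"
  shows "f (t * x + (1 - t) * y) < t * f x + (1 - t) * f y"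
proof (cases "x < y")
  case True
  from strict_conv_real0[OF assms(1,2,3) xy(1,2) True, of "1 - t"] t show ?thesis by simp
next
  case False
  then have "y < x" using xy by simp
  from strict_conv_real0[OF assms(1,2,3) xy(2,1) this, of t] t show ?thesis by (simp add: algebra_simps)
qed

lemma conv_real:
  fixes f f' :: "real \<Rightarrow> real"
  assumes "connected A" "\<And>x. x \<in> A \<Longrightarrow> (f has_real_derivative f' x) (at x)"
    "\<And>x y. x \<in> A \<Longrightarrow> y \<in> A \<Longrightarrow> x < y \<Longrightarrow> f' x < f' y"
    and xy: "x \<in> A" "y \<in> A" and t: "0 < t" "t < 1"
  shows "f (t * x + (1 - t) * y) \<le> t * f x + (1 - t) * f y"
proof (cases "x = y")
  case True
  have "t * x + (1 - t) * x = x" by (simp add: algebra_simps)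
  then show ?thesis using True by (simp add: algebra_simps)
next
  case False
  from strict_conv_real[OF assms(1,2,3) xy False t] show ?thesis by simp
qed

lemma phi_deriv: "0 < u \<Longrightarrow> (phi has_real_derivative ln u) (at u)"
  unfolding phi_def
  by (rule derivative_eq_intros refl | simp)+

lemma psi_deriv: "c * \<rho> < 1 \<Longrightarrow> (psi a c \<tau> has_real_derivative FF a c \<tau> \<rho>) (at \<rho>)"
  unfolding psi_def FF_def
  apply (rule derivative_eq_intros refl | simp)+
  apply (simp add: field_simps)
  done

lemma FF_deriv: "c * \<rho> < 1 \<Longrightarrow> (FF a c \<tau> has_real_derivative FF' a c \<tau> \<rho>) (at \<rho>)"
  unfolding FF'_def FF_def
  apply (rule derivative_eq_intros refl | simp)+
  apply (simp add: field_simps power2_eq_square)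
  done

lemma FF_mono:
  assumes "a \<ge> 0" "c > 0" "\<tau> > 0" "x < y" "c * y < 1"
  shows "FF a c \<tau> x < FF a c \<tau> y"
proof -
  have "c * x < c * y" using assms by simp
  then have "ln (1 - c * y) < ln (1 - c * x)" using assms(5) by (subst ln_less_cancel_iff) linarith+
  then have "\<tau> * c * ln (1 - c * y) < \<tau> * c * ln (1 - c * x)" using assms by simp
  moreover have "a * x \<le> a * y" using assms by (simp add: mult_left_mono)
  ultimately show ?thesis unfolding FF_def by linarith
qed


lemma S_set_eq: "S_set \<epsilon> d = {z. ((1::real), (0::real)) \<bullet> z \<ge> 0} \<inter> {z. ((0::real), (1::real)) \<bullet> z \<ge> 0}
   \<inter> {z. ((1::real), (1::real)) \<bullet> z \<le> 1 / gamma_bar \<epsilon> d}"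
  by (auto simp: S_set_def inner_prod_def)

lemma interior_S: "interior (S_set \<epsilon> d) = {z. 0 < fst z \<and> 0 < snd z \<and> fst z + snd z < 1 / gamma_bar \<epsilon> d}"
  unfolding S_set_eq interior_Int
  by (subst interior_halfspace_ge interior_halfspace_le, simp add: zero_prod_def)+ (auto simp: inner_prod_def)

lemma convex_S: "convex (S_set \<epsilon> d)"
  unfolding S_set_eq by (intro convex_Int convex_halfspace_ge convex_halfspace_le)

lemma h_eq: "h_tilde \<epsilon> d \<tau> Vr Vb z = phi (fst z) + phi (snd z) + fst z * Vr + snd z * Vb
   + psi (alpha_bar \<epsilon> d) (gamma_bar \<epsilon> d) \<tau> (fst z + snd z)"
  by (cases z) (simp add: h_tilde_def Let_def phi_def psi_def power2_eq_square algebra_simps)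

lemma params:
  assumes "\<epsilon> > 0" "d \<in> {2, 3}"
  shows "gamma_bar \<epsilon> d > 0" "alpha_bar \<epsilon> d \<ge> 0"
  using assms by (auto simp: gamma_bar_def alpha_bar_def)


lemma phi_strict: "0 < x \<Longrightarrow> 0 < y \<Longrightarrow> x \<noteq> y \<Longrightarrow> 0 < t \<Longrightarrow> t < 1 \<Longrightarrow>
   phi (t * x + (1 - t) * y) < t * phi x + (1 - t) * phi y"
  by (rule strict_conv_real[where A="{0<..}" and f'=ln]) (auto intro: phi_deriv)

lemma phi_conv: "0 < x \<Longrightarrow> 0 < y \<Longrightarrow> 0 < t \<Longrightarrow> t < 1 \<Longrightarrow>
   phi (t * x + (1 - t) * y) \<le> t * phi x + (1 - t) * phi y"
  by (rule conv_real[where A="{0<..}" and f'=ln]) (auto intro: phi_deriv)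

lemma psi_conv:
  assumes "a \<ge> 0" "c > 0" "\<tau> > 0" "x < 1 / c" "y < 1 / c" "0 < t" "t < 1"
  shows "psi a c \<tau> (t * x + (1 - t) * y) \<le> t * psi a c \<tau> x + (1 - t) * psi a c \<tau> y"
proof (rule conv_real[where A="{..<1/c}" and f'="FF a c \<tau>"])
  fix u assume "u \<in> {..<1/c}"
  then have "c * u < 1" using assms by (simp add: field_simps)
  then show "(psi a c \<tau> has_real_derivative FF a c \<tau> u) (at u)" by (rule psi_deriv)
next
  fix u v assume "u \<in> {..<1/c}" "v \<in> {..<1/c}" "u < v"
  then have "c * v < 1" using assms by (simp add: field_simps)
  then show "FF a c \<tau> u < FF a c \<tau> v" using FF_mono assms \<open>u < v\<close> by blast
qed (use assms in auto)

lemma strict_main: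
  assumes a: "alpha_bar \<epsilon> d \<ge> 0" and c: "gamma_bar \<epsilon> d > 0" and tau: "\<tau> > 0"
  defines "T \<equiv> {z. 0 < fst z \<and> 0 < snd z \<and> fst z + snd z < 1 / gamma_bar \<epsilon> d}"
  assumes x: "x \<in> T" and y: "y \<in> T" and xy: "x \<noteq> y" and t: "0 < t" "t < 1"
  shows "h_tilde \<epsilon> d \<tau> Vr Vb (t *\<^sub>R x + (1 - t) *\<^sub>R y)
     < t * h_tilde \<epsilon> d \<tau> Vr Vb x + (1 - t) * h_tilde \<epsilon> d \<tau> Vr Vb y"
proof -
  obtain r1 b1 where x1: "x = (r1, b1)" by (cases x)
  obtain r2 b2 where y1: "y = (r2, b2)" by (cases y)
  let ?a = "alpha_bar \<epsilon> d" and ?c = "gamma_bar \<epsilon> d"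
  have r1: "0 < r1" "0 < b1" "r1 + b1 < 1 / ?c" using x x1 T_def by auto
  have r2: "0 < r2" "0 < b2" "r2 + b2 < 1 / ?c" using y y1 T_def by auto
  have comb: "t *\<^sub>R x + (1 - t) *\<^sub>R y = (t * r1 + (1 - t) * r2, t * b1 + (1 - t) * b2)"
    using x1 y1 by simp
  have rho: "t * r1 + (1 - t) * r2 + (t * b1 + (1 - t) * b2) = t * (r1 + b1) + (1 - t) * (r2 + b2)"
    by (simp add: algebra_simps)
  have P1: "phi (t * r1 + (1 - t) * r2) \<le> t * phi r1 + (1 - t) * phi r2"
    using phi_conv r1 r2 t by blast
  have P2: "phi (t * b1 + (1 - t) * b2) \<le> t * phi b1 + (1 - t) * phi b2"
    using phi_conv r1 r2 t by blast
  have Q: "psi ?a ?c \<tau> (t * (r1 + b1) + (1 - t) * (r2 + b2))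
      \<le> t * psi ?a ?c \<tau> (r1 + b1) + (1 - t) * psi ?a ?c \<tau> (r2 + b2)"
    using psi_conv[OF a c tau r1(3) r2(3) t] .
  have S: "phi (t * r1 + (1 - t) * r2) + phi (t * b1 + (1 - t) * b2)
      < t * phi r1 + (1 - t) * phi r2 + (t * phi b1 + (1 - t) * phi b2)"
  proof (cases "r1 = r2")
    case True
    then have "b1 \<noteq> b2" using xy x1 y1 by auto
    then have "phi (t * b1 + (1 - t) * b2) < t * phi b1 + (1 - t) * phi b2"
      using phi_strict r1 r2 t by blast
    then show ?thesis using P1 by linarith
  next
    case False
    then have "phi (t * r1 + (1 - t) * r2) < t * phi r1 + (1 - t) * phi r2"
      using phi_strict r1 r2 t by blast
    then show ?thesis using P2 by linarith
  qed
  have L: "(t * r1 + (1 - t) * r2) * Vr + (t * b1 + (1 - t) * b2) * Vb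
     = t * (r1 * Vr + b1 * Vb) + (1 - t) * (r2 * Vr + b2 * Vb)"
    by (simp add: algebra_simps)
  have E: "t * (phi r1 + phi b1 + r1 * Vr + b1 * Vb + psi ?a ?c \<tau> (r1 + b1))
      + (1 - t) * (phi r2 + phi b2 + r2 * Vr + b2 * Vb + psi ?a ?c \<tau> (r2 + b2))
     = (t * phi r1 + (1 - t) * phi r2 + (t * phi b1 + (1 - t) * phi b2))
      + (t * (r1 * Vr + b1 * Vb) + (1 - t) * (r2 * Vr + b2 * Vb))
      + (t * psi ?a ?c \<tau> (r1 + b1) + (1 - t) * psi ?a ?c \<tau> (r2 + b2))"
    by (simp add: algebra_simps)
  have H1: "h_tilde \<epsilon> d \<tau> Vr Vb (t *\<^sub>R x + (1 - t) *\<^sub>R y) = phi (t * r1 + (1 - t) * r2) + phi (t * b1 + (1 - t) * b2)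
      + ((t * r1 + (1 - t) * r2) * Vr + (t * b1 + (1 - t) * b2) * Vb) + psi ?a ?c \<tau> (t * (r1 + b1) + (1 - t) * (r2 + b2))"
    unfolding h_eq comb fst_conv snd_conv rho by (simp only: add.assoc)
  have H2: "h_tilde \<epsilon> d \<tau> Vr Vb x = phi r1 + phi b1 + r1 * Vr + b1 * Vb + psi ?a ?c \<tau> (r1 + b1)"
    by (simp only: h_eq x1 fst_conv snd_conv)
  have H3: "h_tilde \<epsilon> d \<tau> Vr Vb y = phi r2 + phi b2 + r2 * Vr + b2 * Vb + psi ?a ?c \<tau> (r2 + b2)"
    by (simp only: h_eq y1 fst_conv snd_conv)
  show ?thesis
    unfolding H1 H2 H3 E L using S Q by linarith
qed


lemma fst_deriv: "(fst has_derivative fst) (at x)"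
  by (rule bounded_linear_imp_has_derivative[OF bounded_linear_fst])
lemma snd_deriv: "(snd has_derivative snd) (at x)"
  by (rule bounded_linear_imp_has_derivative[OF bounded_linear_snd])
lemma sum_deriv: "((\<lambda>z::real\<times>real. fst z + snd z) has_derivative (\<lambda>v. fst v + snd v)) (at x)"
  by (intro has_derivative_add fst_deriv snd_deriv)

lemma h_deriv:
  assumes "0 < r" "0 < b" "c * (r + b) < 1"
  shows "((\<lambda>z. phi (fst z) + phi (snd z) + fst z * Vr + snd z * Vb + psi a c \<tau> (fst z + snd z))
     has_derivative (\<lambda>v. fst v * ln r + snd v * ln b + fst v * Vr + snd v * Vb + (fst v + snd v) * FF a c \<tau> (r + b))) (at (r, b))"
proof -
  have d1: "((\<lambda>z. phi (fst z)) has_derivative (\<lambda>v. fst v * ln r)) (at (r, b))"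
    using DERIV_compose_FDERIV[where f=phi and g=fst and x="(r,b)", OF _ fst_deriv] phi_deriv[of r] assms by simp
  have d2: "((\<lambda>z. phi (snd z)) has_derivative (\<lambda>v. snd v * ln b)) (at (r, b))"
    using DERIV_compose_FDERIV[where f=phi and g=snd and x="(r,b)", OF _ snd_deriv] phi_deriv[of b] assms by simp
  have d3: "((\<lambda>z. psi a c \<tau> (fst z + snd z)) has_derivative (\<lambda>v. (fst v + snd v) * FF a c \<tau> (r + b))) (at (r, b))"
    using DERIV_compose_FDERIV[where f="psi a c \<tau>" and g="\<lambda>z. fst z + snd z" and x="(r,b)", OF _ sum_deriv] psi_deriv[of c "r+b" a \<tau>] assms by simp
  have d4: "((\<lambda>z. fst z * Vr) has_derivative (\<lambda>v. fst v * Vr)) (at (r, b))"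
    by (intro has_derivative_mult_left fst_deriv)
  have d5: "((\<lambda>z. snd z * Vb) has_derivative (\<lambda>v. snd v * Vb)) (at (r, b))"
    by (intro has_derivative_mult_left snd_deriv)
  show ?thesis by (intro has_derivative_add d1 d2 d3 d4 d5)
qed

lemma g_comp_deriv:
  assumes "0 < u" "c * (r + b) < 1" "(k has_derivative k) (at (r,b))" "k (r, b) = u"
  shows "((\<lambda>z. ln (k z) + V + FF a c \<tau> (fst z + snd z))
     has_derivative (\<lambda>v. k v * (1 / u) + 0 + (fst v + snd v) * FF' a c \<tau> (r + b))) (at (r, b))"
proof -
  have d1: "((\<lambda>z. ln (k z)) has_derivative (\<lambda>v. k v * (1 / u))) (at (r, b))"
    by (rule DERIV_compose_FDERIV[OF _ assms(3)]) (simp add: assms DERIV_ln_divide)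
  have d3: "((\<lambda>z. FF a c \<tau> (fst z + snd z)) has_derivative (\<lambda>v. (fst v + snd v) * FF' a c \<tau> (r + b))) (at (r, b))"
    using DERIV_compose_FDERIV[where f="FF a c \<tau>" and g="\<lambda>z. fst z + snd z" and x="(r,b)", OF _ sum_deriv] FF_deriv[of c "r+b" a \<tau>] assms by simp
  show ?thesis by (intro has_derivative_add d1 d3 has_derivative_const)
qed


lemma solve_rho:
  assumes a: "a \<ge> 0" and c: "c > 0" and tau: "\<tau> > 0"
  shows "\<exists>\<rho>. 0 < \<rho> \<and> \<rho> < 1 / c \<and> ln \<rho> + FF a c \<tau> \<rho> = L"
proof -
  define k where "k \<rho> = ln \<rho> + FF a c \<tau> \<rho>" for \<rho>
  define lo where "lo = min (1 / (2 * c)) (exp (L - a / c - \<tau> * c * ln 2 - 1))"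
  define M where "M = \<bar>L\<bar> + \<bar>ln (2 * c)\<bar> + 1"
  define e where "e = min (1 / 2) (exp (- M / (\<tau> * c)))"
  define hi where "hi = (1 - e) / c"
  have lo0: "0 < lo" using c by (simp add: lo_def)
  have lo1: "lo \<le> 1 / (2 * c)" by (simp add: lo_def)
  have e0: "0 < e" "e \<le> 1/2" by (auto simp: e_def)
  have hi1: "1 / (2 * c) \<le> hi" using e0 c by (simp add: hi_def field_simps)
  have hi2: "hi < 1 / c" using e0 c by (simp add: hi_def field_simps)
  have hi0: "0 < hi" using e0 c by (simp add: hi_def)
  have clo: "c * lo \<le> 1/2" using lo1 c by (simp add: field_simps)
  have klo: "k lo \<le> L"
  proof -
    have "ln lo \<le> ln (exp (L - a / c - \<tau> * c * ln 2 - 1))"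
      using lo0 by (subst ln_le_cancel_iff) (auto simp: lo_def)
    then have "ln lo \<le> L - a / c - \<tau> * c * ln 2 - 1" by simp
    moreover have "a * lo \<le> a / c"
    proof -
      have "lo \<le> 1 / c" using lo1 c by (simp add: field_simps)
      then have "a * lo \<le> a * (1 / c)" using a by (rule mult_left_mono)
      then show ?thesis by simp
    qed
    moreover have "- ln 2 \<le> ln (1 - c * lo)"
    proof -
      have "ln (1/2) \<le> ln (1 - c * lo)" using clo by (subst ln_le_cancel_iff) auto
      then show ?thesis by (simp add: ln_div)
    qed
    then have "\<tau> * c * (- ln 2) \<le> \<tau> * c * ln (1 - c * lo)"
      using tau c by (intro mult_left_mono) auto
    then have "- (\<tau> * c * ln (1 - c * lo)) \<le> \<tau> * c * ln 2" by simp
    ultimately show ?thesis unfolding k_def FF_def by linarith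
  qed
  have khi: "L \<le> k hi"
  proof -
    have "ln (1 / (2 * c)) \<le> ln hi" using hi1 hi0 c by (subst ln_le_cancel_iff) auto
    then have l1: "- ln (2 * c) \<le> ln hi" using c by (simp add: ln_div)
    have "0 \<le> a * hi" using a hi1 c by (simp add: order_trans[of 0 "1/(2*c)" hi])
    moreover have "1 - c * hi = e" using c by (simp add: hi_def field_simps)
    moreover have "ln e \<le> ln (exp (- M / (\<tau> * c)))"
      using e0 by (subst ln_le_cancel_iff) (auto simp: e_def)
    then have "ln e \<le> - M / (\<tau> * c)" by simp
    then have "\<tau> * c * ln e \<le> - M" using tau c by (simp add: field_simps)
    ultimately have "M \<le> a * hi - \<tau> * c * ln (1 - c * hi)" by simp
    then show ?thesis unfolding k_def FF_def M_def using l1 by linarith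
  qed
  have "continuous_on {lo..hi} k"
    unfolding k_def FF_def
  proof (intro continuous_intros)
    show "\<forall>x\<in>{lo..hi}. x \<noteq> 0" using lo0 by auto
    show "\<forall>x\<in>{lo..hi}. 1 - c * x \<noteq> 0"
    proof
      fix x assume "x \<in> {lo..hi}"
      then have "x < 1 / c" using hi2 by auto
      then show "1 - c * x \<noteq> 0" using c by (simp add: field_simps)
    qed
  qed
  then obtain \<rho> where "\<rho> \<ge> lo" "\<rho> \<le> hi" "k \<rho> = L"
    using IVT'[of k lo L hi] klo khi lo1 hi1 by auto
  then show ?thesis using lo0 hi2 unfolding k_def by (intro exI[of _ \<rho>]) auto
qed


definition E1 :: "(real \<times> real) \<Rightarrow>\<^sub>L (real \<times> real)" where "E1 = Blinfun (\<lambda>v. (fst v, 0))"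
definition E2 :: "(real \<times> real) \<Rightarrow>\<^sub>L (real \<times> real)" where "E2 = Blinfun (\<lambda>v. (snd v, fst v))"
definition E3 :: "(real \<times> real) \<Rightarrow>\<^sub>L (real \<times> real)" where "E3 = Blinfun (\<lambda>v. (0, snd v))"

lemma E1_apply[simp]: "blinfun_apply E1 v = (fst v, 0)"
  unfolding E1_def by (subst bounded_linear_Blinfun_apply) (auto intro!: bounded_linear_Pair bounded_linear_fst)
lemma E2_apply[simp]: "blinfun_apply E2 v = (snd v, fst v)"
  unfolding E2_def by (subst bounded_linear_Blinfun_apply) (auto intro!: bounded_linear_Pair bounded_linear_fst bounded_linear_snd)
lemma E3_apply[simp]: "blinfun_apply E3 v = (0, snd v)"
  unfolding E3_def by (subst bounded_linear_Blinfun_apply) (auto intro!: bounded_linear_Pair bounded_linear_snd)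

lemma inv_lemma:
  fixes r b c :: real
  assumes "0 < r" "0 < b" "0 < c" "r < K" "b < K"
  defines "N \<equiv> 1 + c * r + c * b"
  defines "Hx \<equiv> (1 / r + c) *\<^sub>R E1 + c *\<^sub>R E2 + (1 / b + c) *\<^sub>R E3"
  defines "Hi \<equiv> (r * (1 + c * b) / N) *\<^sub>R E1 - (c * r * b / N) *\<^sub>R E2 + (b * (1 + c * r) / N) *\<^sub>R E3"
  shows "Hi o\<^sub>L Hx = id_blinfun" "Hx o\<^sub>L Hi = id_blinfun"
    "norm Hi \<le> K * (norm E1 + norm E2 + norm E3)"
proof -
  have N: "N > 0" using assms by (simp add: N_def add_pos_pos)
  define p where "p = r * (1 + c * b) / N"
  define q where "q = c * r * b / N"
  define s where "s = b * (1 + c * r) / N"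
  have Nne: "N \<noteq> 0" using N by simp
  have f1: "p * (1 / r + c) - q * c = 1"
    using Nne assms(1) unfolding p_def q_def by (simp add: field_simps, (simp add: N_def algebra_simps)?)
  have f2: "p * c - q * (1 / b + c) = 0"
    using Nne assms(2) unfolding p_def q_def by (simp add: field_simps, (simp add: N_def algebra_simps)?)
  have f3: "- q * (1 / r + c) + s * c = 0"
    using Nne assms(1) unfolding s_def q_def by (simp add: field_simps, (simp add: N_def algebra_simps)?)
  have f4: "- q * c + s * (1 / b + c) = 1"
    using Nne assms(2) unfolding s_def q_def by (simp add: field_simps, (simp add: N_def algebra_simps)?)
  have Hi': "Hi = p *\<^sub>R E1 - q *\<^sub>R E2 + s *\<^sub>R E3" unfolding Hi_def p_def q_def s_def ..
  show "Hi o\<^sub>L Hx = id_blinfun"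
  proof (rule blinfun_eqI)
    fix v :: "real \<times> real"
    obtain u w where v: "v = (u, w)" by (cases v)
    have e1: "p * ((1 / r + c) * u + c * w) - q * (c * u + (1 / b + c) * w) = u * (p * (1 / r + c) - q * c) + w * (p * c - q * (1 / b + c))"
      by (simp add: algebra_simps)
    have e2: "- q * ((1 / r + c) * u + c * w) + s * (c * u + (1 / b + c) * w) = u * (- q * (1 / r + c) + s * c) + w * (- q * c + s * (1 / b + c))"
      by (simp add: algebra_simps)
    have "blinfun_apply (Hi o\<^sub>L Hx) v = (p * ((1 / r + c) * u + c * w) - q * (c * u + (1 / b + c) * w), - q * ((1 / r + c) * u + c * w) + s * (c * u + (1 / b + c) * w))"
      unfolding v Hi' Hx_def
      by (simp add: blinfun.add_left blinfun.diff_left blinfun.scaleR_left algebra_simps)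
    also have "\<dots> = v" unfolding e1 e2 f1 f2 f3 f4 v by simp
    finally show "blinfun_apply (Hi o\<^sub>L Hx) v = blinfun_apply id_blinfun v" by simp
  qed
  show "Hx o\<^sub>L Hi = id_blinfun"
  proof (rule blinfun_eqI)
    fix v :: "real \<times> real"
    obtain u w where v: "v = (u, w)" by (cases v)
    have e1: "(1 / r + c) * (p * u - q * w) + c * (- q * u + s * w) = u * (p * (1 / r + c) - q * c) + w * (- q * (1 / r + c) + s * c)"
      by (simp add: algebra_simps)
    have e2: "c * (p * u - q * w) + (1 / b + c) * (- q * u + s * w) = u * (p * c - q * (1 / b + c)) + w * (- q * c + s * (1 / b + c))"
      by (simp add: algebra_simps)
    have "blinfun_apply (Hx o\<^sub>L Hi) v = ((1 / r + c) * (p * u - q * w) + c * (- q * u + s * w), c * (p * u - q * w) + (1 / b + c) * (- q * u + s * w))"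
      unfolding v Hi' Hx_def
      by (simp add: blinfun.add_left blinfun.diff_left blinfun.scaleR_left algebra_simps)
    also have "\<dots> = v" unfolding e1 e2 f1 f2 f3 f4 v by simp
    finally show "blinfun_apply (Hx o\<^sub>L Hi) v = blinfun_apply id_blinfun v" by simp
  qed
  have p: "\<bar>r * (1 + c * b) / N\<bar> \<le> K"
  proof -
    have "r * (1 + c * b) \<le> r * N" using assms by (simp add: N_def)
    then have "r * (1 + c * b) / N \<le> r" using N by (simp add: field_simps)
    then show ?thesis using assms N by auto
  qed
  have q: "\<bar>c * r * b / N\<bar> \<le> K"
  proof -
    have "c * r * b \<le> r * N" using assms by (simp add: N_def algebra_simps)
    then have "c * r * b / N \<le> r" using N by (simp add: field_simps)
    then show ?thesis using assms N by auto
  qed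
  have s: "\<bar>b * (1 + c * r) / N\<bar> \<le> K"
  proof -
    have "b * (1 + c * r) \<le> b * N" using assms by (simp add: N_def)
    then have "b * (1 + c * r) / N \<le> b" using N by (simp add: field_simps)
    then show ?thesis using assms N by auto
  qed
  have "norm Hi \<le> \<bar>r * (1 + c * b) / N\<bar> * norm E1 + \<bar>c * r * b / N\<bar> * norm E2 + \<bar>b * (1 + c * r) / N\<bar> * norm E3"
    unfolding Hi_def
    by (smt (verit) norm_scaleR norm_triangle_ineq norm_triangle_ineq4)
  also have "\<dots> \<le> K * norm E1 + K * norm E2 + K * norm E3"
    by (intro add_mono mult_right_mono p q s norm_ge_zero)
  finally show "norm Hi \<le> K * (norm E1 + norm E2 + norm E3)" by (simp add: algebra_simps)
qed


theorem lemma1: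
  fixes \<epsilon> \<tau> Vr Vb :: real and d :: nat
  assumes "\<epsilon> > 0" and "d \<in> {2, 3}" and "\<tau> > 0"
  shows "strict_convex_on (interior (S_set \<epsilon> d)) (h_tilde \<epsilon> d \<tau> Vr Vb)
       \<and> (\<exists>(g :: real \<times> real \<Rightarrow> real \<times> real) (H :: real \<times> real \<Rightarrow> ((real \<times> real) \<Rightarrow>\<^sub>L (real \<times> real))).
            (\<forall>x\<in>interior (S_set \<epsilon> d).
               (h_tilde \<epsilon> d \<tau> Vr Vb has_derivative (\<lambda>v. g x \<bullet> v)) (at x)
             \<and> (g has_derivative blinfun_apply (H x)) (at x))
          \<and> continuous_on (interior (S_set \<epsilon> d)) H
          \<and> bij_betw g (interior (S_set \<epsilon> d)) UNIV
          \<and> (\<exists>C. \<forall>x\<in>interior (S_set \<epsilon> d). \<exists>Hi.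
               Hi o\<^sub>L H x = id_blinfun \<and> H x o\<^sub>L Hi = id_blinfun \<and> norm Hi \<le> C))"
proof -
  define a where "a = alpha_bar \<epsilon> d"
  define c where "c = gamma_bar \<epsilon> d"
  have a0: "a \<ge> 0" and c0: "c > 0" using params[OF assms(1,2)] by (auto simp: a_def c_def)
  define T where "T = {z. 0 < fst z \<and> 0 < snd z \<and> fst z + snd z < 1 / gamma_bar \<epsilon> d}"
  have intT: "interior (S_set \<epsilon> d) = T" unfolding T_def by (rule interior_S)
  have memT: "z \<in> T \<longleftrightarrow> 0 < fst z \<and> 0 < snd z \<and> c * (fst z + snd z) < 1" for z
    using c0 by (auto simp: T_def c_def[symmetric] field_simps)
  have SC: "strict_convex_on T (h_tilde \<epsilon> d \<tau> Vr Vb)"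
    unfolding strict_convex_on_def
  proof (intro conjI ballI allI impI)
    show "convex T" using convex_interior[OF convex_S[of \<epsilon> d]] unfolding intT .
  next
    fix x y and t :: real assume "x \<in> T" "y \<in> T" "x \<noteq> y \<and> 0 < t \<and> t < 1"
    then show "h_tilde \<epsilon> d \<tau> Vr Vb (t *\<^sub>R x + (1 - t) *\<^sub>R y)
      < t * h_tilde \<epsilon> d \<tau> Vr Vb x + (1 - t) * h_tilde \<epsilon> d \<tau> Vr Vb y"
      using strict_main[of \<epsilon> d \<tau> x y t Vr Vb] a0 c0 assms(3) unfolding T_def a_def c_def by blast
  qed
  define g where "g z = (ln (fst z) + Vr + FF a c \<tau> (fst z + snd z), ln (snd z) + Vb + FF a c \<tau> (fst z + snd z))" for z
  define cc where "cc z = FF' a c \<tau> (fst z + snd z)" for z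
  define H where "H z = (1 / fst z + cc z) *\<^sub>R E1 + cc z *\<^sub>R E2 + (1 / snd z + cc z) *\<^sub>R E3" for z
  have hfun: "h_tilde \<epsilon> d \<tau> Vr Vb = (\<lambda>z. phi (fst z) + phi (snd z) + fst z * Vr + snd z * Vb + psi a c \<tau> (fst z + snd z))"
    by (rule ext) (simp add: h_eq a_def c_def)
  have DER: "(h_tilde \<epsilon> d \<tau> Vr Vb has_derivative (\<lambda>v. g x \<bullet> v)) (at x) \<and> (g has_derivative blinfun_apply (H x)) (at x)"
    if "x \<in> T" for x
  proof -
    obtain r b where x: "x = (r, b)" by (cases x)
    have rb: "0 < r" "0 < b" "c * (r + b) < 1" using that memT x by auto
    have D1: "(h_tilde \<epsilon> d \<tau> Vr Vb has_derivative (\<lambda>v. fst v * ln r + snd v * ln b + fst v * Vr + snd v * Vb + (fst v + snd v) * FF a c \<tau> (r + b))) (at x)"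
      unfolding hfun x by (rule h_deriv[OF rb])
    have "(\<lambda>v. fst v * ln r + snd v * ln b + fst v * Vr + snd v * Vb + (fst v + snd v) * FF a c \<tau> (r + b)) = (\<lambda>v. g x \<bullet> v)"
      by (rule ext) (simp add: g_def x inner_prod_def algebra_simps)
    with D1 have P1: "(h_tilde \<epsilon> d \<tau> Vr Vb has_derivative (\<lambda>v. g x \<bullet> v)) (at x)" by simp
    have G1: "((\<lambda>z. ln (fst z) + Vr + FF a c \<tau> (fst z + snd z))
       has_derivative (\<lambda>v. fst v * (1 / r) + 0 + (fst v + snd v) * FF' a c \<tau> (r + b))) (at (r, b))"
      by (rule g_comp_deriv[OF rb(1,3) fst_deriv]) simp
    have G2: "((\<lambda>z. ln (snd z) + Vb + FF a c \<tau> (fst z + snd z))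
       has_derivative (\<lambda>v. snd v * (1 / b) + 0 + (fst v + snd v) * FF' a c \<tau> (r + b))) (at (r, b))"
      by (rule g_comp_deriv[OF rb(2,3) snd_deriv]) simp
    have G: "(g has_derivative (\<lambda>v. (fst v * (1 / r) + 0 + (fst v + snd v) * FF' a c \<tau> (r + b),
        snd v * (1 / b) + 0 + (fst v + snd v) * FF' a c \<tau> (r + b)))) (at x)"
      unfolding x g_def by (rule has_derivative_Pair[OF G1 G2])
    have "(\<lambda>v. (fst v * (1 / r) + 0 + (fst v + snd v) * FF' a c \<tau> (r + b),
        snd v * (1 / b) + 0 + (fst v + snd v) * FF' a c \<tau> (r + b))) = blinfun_apply (H x)"
      by (rule ext) (simp add: H_def cc_def x blinfun.add_left blinfun.scaleR_left algebra_simps)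
    with G have "(g has_derivative blinfun_apply (H x)) (at x)" by simp
    with P1 show ?thesis by simp
  qed
  have CONT: "continuous_on T H"
    unfolding H_def cc_def FF'_def
    by (intro continuous_intros) (auto simp: memT)
  have INJ: "inj_on g T"
  proof (rule inj_onI)
    fix x y assume xT: "x \<in> T" and yT: "y \<in> T" and gxy: "g x = g y"
    obtain r1 b1 where x: "x = (r1, b1)" by (cases x)
    obtain r2 b2 where y: "y = (r2, b2)" by (cases y)
    have h1: "0 < r1" "0 < b1" "c * (r1 + b1) < 1" using xT memT x by auto
    have h2: "0 < r2" "0 < b2" "c * (r2 + b2) < 1" using yT memT y by auto
    have e1: "ln r1 + FF a c \<tau> (r1 + b1) = ln r2 + FF a c \<tau> (r2 + b2)"
      and e2: "ln b1 + FF a c \<tau> (r1 + b1) = ln b2 + FF a c \<tau> (r2 + b2)"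
      using gxy by (auto simp: g_def x y)
    have nlt: False if "p1 < p2" "ln u1 + FF a c \<tau> p1 = ln u2 + FF a c \<tau> p2" "ln v1 + FF a c \<tau> p1 = ln v2 + FF a c \<tau> p2"
      "0 < u1" "0 < u2" "0 < v1" "0 < v2" "p1 = u1 + v1" "p2 = u2 + v2" "c * p2 < 1" for p1 p2 u1 u2 v1 v2
    proof -
      have "FF a c \<tau> p1 < FF a c \<tau> p2" using FF_mono[OF a0 c0 assms(3) that(1,10)] .
      then have "ln u2 < ln u1" "ln v2 < ln v1" using that(2,3) by linarith+
      then have "u2 < u1" "v2 < v1" using that(4-7) by auto
      then show False using that(1,8,9) by linarith
    qed
    have "r1 + b1 = r2 + b2"
    proof (rule ccontr)
      assume "r1 + b1 \<noteq> r2 + b2"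
      then consider "r1 + b1 < r2 + b2" | "r2 + b2 < r1 + b1" by linarith
      then show False
      proof cases
        case 1 show False by (rule nlt[OF 1 e1 e2]) (use h1 h2 in auto)
      next
        case 2 show False by (rule nlt[OF 2 e1[symmetric] e2[symmetric]]) (use h1 h2 in auto)
      qed
    qed
    then have "ln r1 = ln r2" "ln b1 = ln b2" using e1 e2 by auto
    then have "r1 = r2" "b1 = b2" using h1 h2 by auto
    then show "x = y" using x y by simp
  qed
  have SURJ: "g ` T = UNIV"
  proof (intro set_eqI iffI)
    fix z :: "real \<times> real" assume "z \<in> UNIV"
    obtain p q where z: "z = (p, q)" by (cases z)
    define P where "P = exp (p - Vr)"
    define Q where "Q = exp (q - Vb)"
    obtain \<rho> where rho: "0 < \<rho>" "\<rho> < 1 / c" "ln \<rho> + FF a c \<tau> \<rho> = ln (P + Q)"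
      using solve_rho[OF a0 c0 assms(3)] by blast
    define r where "r = P * exp (- FF a c \<tau> \<rho>)"
    define b where "b = Q * exp (- FF a c \<tau> \<rho>)"
    have PQ: "0 < P" "0 < Q" by (auto simp: P_def Q_def)
    have "r + b = (P + Q) * exp (- FF a c \<tau> \<rho>)" by (simp add: r_def b_def algebra_simps)
    also have "\<dots> = exp (ln (P + Q)) * exp (- FF a c \<tau> \<rho>)" using PQ by simp
    also have "\<dots> = exp (ln \<rho>)" unfolding rho(3)[symmetric] by (simp add: exp_add[symmetric])
    also have "\<dots> = \<rho>" using rho by simp
    finally have rb: "r + b = \<rho>" .
    have "(r, b) \<in> T" using rb rho PQ c0 by (auto simp: memT r_def b_def field_simps)
    moreover have "g (r, b) = z"
      unfolding g_def z fst_conv snd_conv rb using PQ by (simp add: r_def b_def ln_mult P_def Q_def)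
    ultimately show "z \<in> g ` T" by (metis image_eqI)
  qed simp
  have INV: "\<exists>C. \<forall>x\<in>T. \<exists>Hi. Hi o\<^sub>L H x = id_blinfun \<and> H x o\<^sub>L Hi = id_blinfun \<and> norm Hi \<le> C"
  proof (rule exI[of _ "1 / c * (norm E1 + norm E2 + norm E3)"], intro ballI)
    fix x assume xT: "x \<in> T"
    obtain r b where x: "x = (r, b)" by (cases x)
    have rb: "0 < r" "0 < b" "c * (r + b) < 1" using xT memT x by auto
    have cc0: "0 < cc x"
    proof -
      have "0 < \<tau> * c\<^sup>2 / (1 - c * (r + b))" using rb c0 assms(3) by simp
      then show ?thesis using a0 by (simp add: cc_def FF'_def x)
    qed
    have "c * r < 1" "c * b < 1" using rb c0 by (simp_all add: distrib_left) (smt (verit) mult_pos_pos)+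
    then have rK: "r < 1 / c" "b < 1 / c" using c0 by (auto simp: field_simps)
    note L = inv_lemma[OF rb(1,2) cc0 rK]
    have Hx: "H x = (1 / r + cc x) *\<^sub>R E1 + cc x *\<^sub>R E2 + (1 / b + cc x) *\<^sub>R E3"
      by (simp add: H_def x)
    show "\<exists>Hi. Hi o\<^sub>L H x = id_blinfun \<and> H x o\<^sub>L Hi = id_blinfun \<and> norm Hi \<le> 1 / c * (norm E1 + norm E2 + norm E3)"
      unfolding Hx using L by blast
  qed
  show ?thesis
    unfolding intT
    using SC DER CONT INJ SURJ INV unfolding bij_betw_def by blast
qed

end
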